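(* Consider the fading dirty paper channel over $\mathbb F_q$: at each channel use $\tau$ the receiver observes $(Y^{(\tau)},G^{(\tau)})$ with $Y^{(\tau)}=X^{(\tau)}+G^{(\tau)}\Theta^{(\tau)}$, where $X^{(\tau)}\in\mathbb F_q$ is the transmitted symbol, and $\Theta^{(\tau)},G^{(\tau)}$ are independent, uniform on $\mathbb F_q$, i.i.d. across channel uses and independent of the message; the whole sequence $\Theta^{[n]}$ is known to the transmitter in advance (non-causally) but not to the receiver, and $G^{[n]}$ is known to the receiver but not to the transmitter. Then the NS-assisted capacity is $C^{\mathrm{NS}}=\log_2 q$, while the classical capacity satisfies $C=o_q(\log_2 q)$, i.e. $C/\log_2q\to0$ as $q\to\infty$. In particular $C^{\mathrm{NS}}/C$ is unbounded as $q\to\infty$.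
   Context: A message $W$ is uniform on a finite set $\mathcal M$. A classical scheme over $n$ uses: a stochastic encoder $X^{[n]}=\phi(W,\Theta^{[n]})$ and stochastic decoder $\hat W=\psi(Y^{[n]},G^{[n]})$. A bipartite non-signaling (NS) box is a conditional pmf $\mathcal Z(u,v\mid s,t)$ (finite output alphabets) such that the marginal of $u$ does not depend on $t$ and the marginal of $v$ does not depend on $s$. An NS-assisted scheme: the transmitter inputs $(W,\Theta^{[n]})$ to the box and obtains $X^{[n]}$, the receiver inputs $(Y^{[n]},G^{[n]})$ and obtains $\hat W$. A rate $R$ is achievable if some sequence of schemes has $\Pr(\hat W\ne W)\to0$ and $\lim\frac1n\log_2|\mathcal M^{(n)}|\ge R$; the capacity is the supremum of achievable rates. *)

theory Defs
  imports "HOL-Algebra.Ring" "HOL-Probability.Probability_Mass_Function"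
begin

definition seqs :: "('a, 'b) ring_scheme \<Rightarrow> nat \<Rightarrow> 'a list set" where
  "seqs R n = {xs. length xs = n \<and> set xs \<subseteq> carrier R}"

definition chan_out :: "('a, 'b) ring_scheme \<Rightarrow> 'a list \<Rightarrow> 'a list \<Rightarrow> 'a list \<Rightarrow> 'a list" where
  "chan_out R xs ts gs = map (\<lambda>i. xs ! i \<oplus>\<^bsub>R\<^esub> (gs ! i \<otimes>\<^bsub>R\<^esub> ts ! i)) [0..<length xs]"

text \<open>Message set {..<m}; stochastic encoder phi w theta (distribution of X^[n]);
  stochastic decoder psi y g (distribution of the estimate).\<close>
definition classical_scheme ::
  "('a, 'b) ring_scheme \<Rightarrow> nat \<Rightarrow> nat \<Rightarrow> (nat \<Rightarrow> 'a list \<Rightarrow> 'a list pmf)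
     \<Rightarrow> ('a list \<Rightarrow> 'a list \<Rightarrow> nat pmf) \<Rightarrow> bool" where
  "classical_scheme R n m enc dec \<longleftrightarrow> m \<ge> 1 \<and>
     (\<forall>w<m. \<forall>ts\<in>seqs R n. set_pmf (enc w ts) \<subseteq> seqs R n)"

text \<open>Pr(hat W = W) with W uniform on {..<m}, Theta^[n], G^[n] i.i.d. uniform, independent.\<close>
definition classical_success ::
  "('a, 'b) ring_scheme \<Rightarrow> nat \<Rightarrow> nat \<Rightarrow> (nat \<Rightarrow> 'a list \<Rightarrow> 'a list pmf)
     \<Rightarrow> ('a list \<Rightarrow> 'a list \<Rightarrow> nat pmf) \<Rightarrow> real" where
  "classical_success R n m enc dec =
     (\<Sum>w<m. \<Sum>ts\<in>seqs R n. \<Sum>gs\<in>seqs R n. \<Sum>xs\<in>seqs R n.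
        pmf (enc w ts) xs * pmf (dec (chan_out R xs ts gs) gs) w)
     / (real m * real (card (carrier R)) ^ (2 * n))"

definition classical_error ::
  "('a, 'b) ring_scheme \<Rightarrow> nat \<Rightarrow> nat \<Rightarrow> (nat \<Rightarrow> 'a list \<Rightarrow> 'a list pmf)
     \<Rightarrow> ('a list \<Rightarrow> 'a list \<Rightarrow> nat pmf) \<Rightarrow> real" where
  "classical_error R n m enc dec = 1 - classical_success R n m enc dec"

definition achievable_classical :: "('a, 'b) ring_scheme \<Rightarrow> real \<Rightarrow> bool" where
  "achievable_classical R r \<longleftrightarrow>
     (\<exists>(m :: nat \<Rightarrow> nat) (enc :: nat \<Rightarrow> nat \<Rightarrow> 'a list \<Rightarrow> 'a list pmf)
        (dec :: nat \<Rightarrow> 'a list \<Rightarrow> 'a list \<Rightarrow> nat pmf) (L :: real).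
        (\<forall>n\<ge>1. classical_scheme R n (m n) (enc n) (dec n)) \<and>
        (\<lambda>n. classical_error R n (m n) (enc n) (dec n)) \<longlonglongrightarrow> 0 \<and>
        (\<lambda>n. log 2 (real (m n)) / real n) \<longlonglongrightarrow> L \<and> L \<ge> r)"

definition capacity_classical :: "('a, 'b) ring_scheme \<Rightarrow> real" where
  "capacity_classical R = Sup {r. achievable_classical R r}"

text \<open>A box Z s t (s = (W, Theta^[n]) transmitter input, t = (Y^[n], G^[n]) receiver input)
  giving a joint distribution of (u, v) = (X^[n], hat W), with finite output alphabets,
  non-signaling on the relevant input domains.\<close>
definition ns_box ::
  "('a, 'b) ring_scheme \<Rightarrow> nat \<Rightarrow> nat
     \<Rightarrow> (nat \<times> 'a list \<Rightarrow> 'a list \<times> 'a list \<Rightarrow> ('a list \<times> nat) pmf) \<Rightarrow> bool" where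
  "ns_box R n m Z \<longleftrightarrow> m \<ge> 1 \<and>
     (\<exists>V. finite V \<and> (\<forall>s\<in>{..<m} \<times> seqs R n. \<forall>t\<in>seqs R n \<times> seqs R n.
         set_pmf (Z s t) \<subseteq> seqs R n \<times> V)) \<and>
     (\<forall>s\<in>{..<m} \<times> seqs R n. \<forall>t\<in>seqs R n \<times> seqs R n. \<forall>t'\<in>seqs R n \<times> seqs R n.
         map_pmf fst (Z s t) = map_pmf fst (Z s t')) \<and>
     (\<forall>s\<in>{..<m} \<times> seqs R n. \<forall>s'\<in>{..<m} \<times> seqs R n. \<forall>t\<in>seqs R n \<times> seqs R n.
         map_pmf snd (Z s t) = map_pmf snd (Z s' t))"

text \<open>Standard semantics of an NS box composed with a channel:
  Pr(X = x, hat W = v | W, Theta, G) = Z((x,v) | (W,Theta), (x + G Theta, G)).\<close>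
definition ns_success ::
  "('a, 'b) ring_scheme \<Rightarrow> nat \<Rightarrow> nat
     \<Rightarrow> (nat \<times> 'a list \<Rightarrow> 'a list \<times> 'a list \<Rightarrow> ('a list \<times> nat) pmf) \<Rightarrow> real" where
  "ns_success R n m Z =
     (\<Sum>w<m. \<Sum>ts\<in>seqs R n. \<Sum>gs\<in>seqs R n. \<Sum>xs\<in>seqs R n.
        pmf (Z (w, ts) (chan_out R xs ts gs, gs)) (xs, w))
     / (real m * real (card (carrier R)) ^ (2 * n))"

definition ns_error ::
  "('a, 'b) ring_scheme \<Rightarrow> nat \<Rightarrow> nat
     \<Rightarrow> (nat \<times> 'a list \<Rightarrow> 'a list \<times> 'a list \<Rightarrow> ('a list \<times> nat) pmf) \<Rightarrow> real" where
  "ns_error R n m Z = 1 - ns_success R n m Z"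

definition achievable_NS :: "('a, 'b) ring_scheme \<Rightarrow> real \<Rightarrow> bool" where
  "achievable_NS R r \<longleftrightarrow>
     (\<exists>(m :: nat \<Rightarrow> nat)
        (Z :: nat \<Rightarrow> nat \<times> 'a list \<Rightarrow> 'a list \<times> 'a list \<Rightarrow> ('a list \<times> nat) pmf) (L :: real).
        (\<forall>n\<ge>1. ns_box R n (m n) (Z n)) \<and>
        (\<lambda>n. ns_error R n (m n) (Z n)) \<longlonglongrightarrow> 0 \<and>
        (\<lambda>n. log 2 (real (m n)) / real n) \<longlonglongrightarrow> L \<and> L \<ge> r)"

definition capacity_NS :: "('a, 'b) ring_scheme \<Rightarrow> real" where
  "capacity_NS R = Sup {r. achievable_NS R r}"

end

theory Submission
  imports Defs "HOL-Algebra.Weak_Morphisms" "HOL-Number_Theory.Residues"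
begin


definition lseqs :: "'a set \<Rightarrow> nat \<Rightarrow> 'a list set" where
  "lseqs S n = {xs. length xs = n \<and> set xs \<subseteq> S}"

lemma lseqs_Suc: "lseqs S (Suc n) = (\<lambda>(a,xs). a # xs) ` (S \<times> lseqs S n)"
  unfolding lseqs_def by (auto simp: length_Suc_conv image_def)

lemma lseqs_finite: "finite S \<Longrightarrow> finite (lseqs S n)"
  unfolding lseqs_def using finite_lists_length_eq[of S n] by (simp add: conj_commute)

lemma sum_prod_lseqs:
  fixes F :: "nat \<Rightarrow> 'a \<Rightarrow> 'b::comm_semiring_1"
  assumes "finite S"
  shows "(\<Sum>g\<in>lseqs S n. \<Prod>i<n. F i (g!i)) = (\<Prod>i<n. \<Sum>a\<in>S. F i a)"
proof (induction n arbitrary: F)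
  case 0
  have "lseqs S 0 = {[]}" by (auto simp: lseqs_def)
  then show ?case by simp
next
  case (Suc n)
  have inj: "inj_on (\<lambda>(a,xs). a # xs) (S \<times> lseqs S n)" by (auto simp: inj_on_def)
  have "(\<Sum>g\<in>lseqs S (Suc n). \<Prod>i<Suc n. F i (g!i))
      = (\<Sum>(a,xs)\<in>S \<times> lseqs S n. \<Prod>i<Suc n. F i ((a#xs)!i))"
    unfolding lseqs_Suc by (subst sum.reindex[OF inj]) (simp add: case_prod_unfold)
  also have "\<dots> = (\<Sum>a\<in>S. \<Sum>xs\<in>lseqs S n. F 0 a * (\<Prod>i<n. F (Suc i) (xs!i)))"
    by (subst sum.cartesian_product[symmetric]) (simp only: prod.lessThan_Suc_shift nth_Cons_0 nth_Cons_Suc)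
  also have "\<dots> = (\<Sum>a\<in>S. F 0 a) * (\<Sum>xs\<in>lseqs S n. \<Prod>i<n. F (Suc i) (xs!i))"
    by (simp add: sum_product)
  also have "\<dots> = (\<Sum>a\<in>S. F 0 a) * (\<Prod>i<n. \<Sum>a\<in>S. F (Suc i) a)"
    using Suc.IH[of "\<lambda>i. F (Suc i)"] by simp
  also have "\<dots> = (\<Prod>i<Suc n. \<Sum>a\<in>S. F i a)" by (simp only: prod.lessThan_Suc_shift)
  finally show ?case .
qed

lemma card_lseqs: "finite S \<Longrightarrow> card (lseqs S n) = card S ^ n"
  using sum_prod_lseqs[of S "\<lambda>i a. 1::nat" n] by simp



lemma seqs_lseqs: "seqs R n = lseqs (carrier R) n"
  by (simp add: seqs_def lseqs_def)

lemma chan_out_nth: "i < length xs \<Longrightarrow> chan_out R xs ts gs ! i = xs!i \<oplus>\<^bsub>R\<^esub> (gs!i \<otimes>\<^bsub>R\<^esub> ts!i)"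
  by (simp add: chan_out_def)

lemma chan_out_seqs:
  assumes "ring R" "xs \<in> seqs R n" "ts \<in> seqs R n" "gs \<in> seqs R n"
  shows "chan_out R xs ts gs \<in> seqs R n"
proof -
  interpret ring R by fact
  show ?thesis using assms(2-4)
    apply (auto simp: seqs_def chan_out_def in_set_conv_nth subset_iff)
    apply (intro add.m_closed m_closed)
    by auto
qed

lemma sum_pmf_le1: "finite A \<Longrightarrow> sum (pmf p) A \<le> 1"
  by (metis measure_measure_pmf_finite measure_pmf.prob_le_1)

lemma pmf_le_snd: "pmf p (x, w) \<le> pmf (map_pmf snd p) w"
proof -
  have "pmf p (x,w) = measure p {(x,w)}" by (simp add: measure_pmf_single)
  also have "\<dots> \<le> measure p (snd -` {w})"
    by (rule measure_pmf.finite_measure_mono) auto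
  finally show ?thesis by (simp add: pmf_map)
qed

lemma ns_converse:
  assumes "ring R" "finite (carrier R)" "ns_box R n m Z"
  shows "ns_success R n m Z \<le> real (card (carrier R)) ^ n / real m"
proof -
  let ?S = "seqs R n"
  let ?q = "real (card (carrier R))"
  have fin: "finite ?S" using assms(2) by (simp add: seqs_lseqs lseqs_finite)
  have cardS: "card ?S = card (carrier R) ^ n" using assms(2) by (simp add: seqs_lseqs card_lseqs)
  have m1: "m \<ge> 1" using assms(3) by (simp add: ns_box_def)
  have z: "\<zero>\<^bsub>R\<^esub> \<in> carrier R" using assms(1) by (simp add: ring.ring_simprules(2))
  define s0 where "s0 = (0::nat, replicate n \<zero>\<^bsub>R\<^esub>)"
  have s0: "s0 \<in> {..<m} \<times> ?S" using m1 z by (auto simp: s0_def seqs_def)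
  define P where "P ts gs xs w = pmf (map_pmf snd (Z s0 (chan_out R xs ts gs, gs))) w" for ts gs xs w
  have le: "pmf (Z (w, ts) (chan_out R xs ts gs, gs)) (xs, w) \<le> P ts gs xs w"
    if "w < m" "ts \<in> ?S" "gs \<in> ?S" "xs \<in> ?S" for w ts gs xs
  proof -
    have "chan_out R xs ts gs \<in> ?S" using chan_out_seqs[OF assms(1)] that by blast
    then have "map_pmf snd (Z (w, ts) (chan_out R xs ts gs, gs)) = map_pmf snd (Z s0 (chan_out R xs ts gs, gs))"
      using assms(3) that s0 unfolding ns_box_def by blast
    then show ?thesis using pmf_le_snd unfolding P_def by metis
  qed
  have "(\<Sum>w<m. \<Sum>ts\<in>?S. \<Sum>gs\<in>?S. \<Sum>xs\<in>?S. pmf (Z (w, ts) (chan_out R xs ts gs, gs)) (xs, w))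
     \<le> (\<Sum>w<m. \<Sum>ts\<in>?S. \<Sum>gs\<in>?S. \<Sum>xs\<in>?S. P ts gs xs w)"
    by (intro sum_mono le) auto
  also have "\<dots> = (\<Sum>ts\<in>?S. \<Sum>gs\<in>?S. \<Sum>xs\<in>?S. \<Sum>w<m. P ts gs xs w)"
    by (subst sum.swap, rule sum.cong, simp, subst sum.swap, rule sum.cong, simp, subst sum.swap, simp)
  also have "\<dots> \<le> (\<Sum>ts\<in>?S. \<Sum>gs\<in>?S. \<Sum>xs\<in>?S. 1)"
    unfolding P_def by (intro sum_mono sum_pmf_le1) auto
  also have "\<dots> = ?q ^ n * ?q ^ n * ?q ^ n" by (simp add: cardS)
  finally have *: "(\<Sum>w<m. \<Sum>ts\<in>?S. \<Sum>gs\<in>?S. \<Sum>xs\<in>?S. pmf (Z (w, ts) (chan_out R xs ts gs, gs)) (xs, w))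
     \<le> ?q ^ n * ?q ^ n * ?q ^ n" .
  have qpos: "?q > 0" using z assms(2) card_gt_0_iff by force
  have "ns_success R n m Z \<le> ?q ^ n * ?q ^ n * ?q ^ n / (real m * ?q ^ (2*n))"
    unfolding ns_success_def using m1 qpos by (intro divide_right_mono *) auto
  also have "?q ^ (2*n) = ?q ^ n * ?q ^ n" by (simp only: mult_2 power_add)
  then have "?q ^ n * ?q ^ n * ?q ^ n / (real m * ?q ^ (2*n)) = ?q ^ n / real m" using qpos m1 by simp
  finally show ?thesis .
qed


context cring begin
lemma t1: "c \<in> carrier R \<Longrightarrow> a \<in> carrier R \<Longrightarrow> c \<ominus> (c \<ominus> a) = a"
  by algebra
lemma t2: "d \<in> carrier R \<Longrightarrow> x \<in> carrier R \<Longrightarrow> u \<in> carrier R \<Longrightarrow> ((d \<oplus> (x \<oplus> u)) \<ominus> u) \<ominus> x = d"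
  by algebra
end


definition benc :: "('a, 'b) ring_scheme \<Rightarrow> nat \<Rightarrow> 'a list \<Rightarrow> nat" where
  "benc R n = (SOME h. bij_betw h (seqs R n) {..<card (seqs R n)})"

definition bdec :: "('a, 'b) ring_scheme \<Rightarrow> nat \<Rightarrow> nat \<Rightarrow> 'a list" where
  "bdec R n = the_inv_into (seqs R n) (benc R n)"

lemma benc_bij: "finite (carrier R) \<Longrightarrow> bij_betw (benc R n) (seqs R n) {..<card (seqs R n)}"
proof -
  assume "finite (carrier R)"
  then have "finite (seqs R n)" by (simp add: seqs_lseqs lseqs_finite)
  then have "\<exists>h. bij_betw h (seqs R n) {..<card (seqs R n)}"
    using ex_bij_betw_finite_nat[of "seqs R n"] by (simp add: atLeast0LessThan)
  then show ?thesis unfolding benc_def by (rule someI_ex)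
qed

lemma bdec_bij: "finite (carrier R) \<Longrightarrow> bij_betw (bdec R n) {..<card (seqs R n)} (seqs R n)"
  unfolding bdec_def by (rule bij_betw_the_inv_into[OF benc_bij])

lemma benc_bdec: "finite (carrier R) \<Longrightarrow> w < card (seqs R n) \<Longrightarrow> benc R n (bdec R n w) = w"
  unfolding bdec_def using benc_bij[of R n]
  by (simp add: bij_betw_def f_the_inv_into_f)

definition cvec :: "('a, 'b) ring_scheme \<Rightarrow> nat \<Rightarrow> nat \<Rightarrow> 'a list \<Rightarrow> 'a list \<Rightarrow> 'a list \<Rightarrow> 'a list" where
  "cvec R n w ts y gs = map (\<lambda>i. (bdec R n w ! i \<oplus>\<^bsub>R\<^esub> y ! i) \<ominus>\<^bsub>R\<^esub> (gs ! i \<otimes>\<^bsub>R\<^esub> ts ! i)) [0..<n]"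

definition fvec :: "('a, 'b) ring_scheme \<Rightarrow> nat \<Rightarrow> 'a list \<Rightarrow> 'a list \<Rightarrow> 'a list" where
  "fvec R n c a = map (\<lambda>i. c ! i \<ominus>\<^bsub>R\<^esub> a ! i) [0..<n]"

definition nsZ :: "('a, 'b) ring_scheme \<Rightarrow> nat \<Rightarrow> nat \<times> 'a list \<Rightarrow> 'a list \<times> 'a list \<Rightarrow> ('a list \<times> nat) pmf" where
  "nsZ R n s t = map_pmf (\<lambda>a. (a, benc R n (fvec R n (cvec R n (fst s) (snd s) (fst t) (snd t)) a)))
       (pmf_of_set (seqs R n))"

lemma seqs_nth: "xs \<in> seqs R n \<Longrightarrow> i < n \<Longrightarrow> xs ! i \<in> carrier R"
  by (auto simp: seqs_def)

lemma seqs_len: "xs \<in> seqs R n \<Longrightarrow> length xs = n"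
  by (auto simp: seqs_def)

lemma seqs_mapI: "(\<And>i. i < n \<Longrightarrow> f i \<in> carrier R) \<Longrightarrow> map f [0..<n] \<in> seqs R n"
  by (auto simp: seqs_def)

lemma fvec_seqs: "cring R \<Longrightarrow> c \<in> seqs R n \<Longrightarrow> a \<in> seqs R n \<Longrightarrow> fvec R n c a \<in> seqs R n"
  unfolding fvec_def by (intro seqs_mapI cring.cring_simprules(4) seqs_nth) auto

lemma fvec_fvec: "cring R \<Longrightarrow> c \<in> seqs R n \<Longrightarrow> a \<in> seqs R n \<Longrightarrow> fvec R n c (fvec R n c a) = a"
  unfolding fvec_def
  by (rule nth_equalityI) (auto simp: seqs_len seqs_nth cring.t1)

lemma fvec_bij: "cring R \<Longrightarrow> c \<in> seqs R n \<Longrightarrow> bij_betw (fvec R n c) (seqs R n) (seqs R n)"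
  by (rule bij_betw_byWitness[where f' = "fvec R n c"]) (auto simp: fvec_fvec fvec_seqs)

lemma cvec_seqs: "cring R \<Longrightarrow> finite (carrier R) \<Longrightarrow> w < card (seqs R n) \<Longrightarrow> ts \<in> seqs R n \<Longrightarrow> y \<in> seqs R n \<Longrightarrow> gs \<in> seqs R n
   \<Longrightarrow> cvec R n w ts y gs \<in> seqs R n"
  unfolding cvec_def
  apply (intro seqs_mapI cring.cring_simprules(4) cring.cring_simprules(1) cring.cring_simprules(5) seqs_nth[where n=n])
  using bij_betwE[OF bdec_bij] by auto

lemma fvec_cvec: "cring R \<Longrightarrow> finite (carrier R) \<Longrightarrow> w < card (seqs R n) \<Longrightarrow> ts \<in> seqs R n \<Longrightarrow> xs \<in> seqs R n \<Longrightarrow> gs \<in> seqs R n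
   \<Longrightarrow> fvec R n (cvec R n w ts (chan_out R xs ts gs) gs) xs = bdec R n w"
proof -
  assume a: "cring R" "finite (carrier R)" "w < card (seqs R n)" "ts \<in> seqs R n" "xs \<in> seqs R n" "gs \<in> seqs R n"
  have d: "bdec R n w \<in> seqs R n" using bij_betwE[OF bdec_bij[OF a(2)]] a(3) by auto
  show ?thesis unfolding fvec_def cvec_def
  proof (rule nth_equalityI)
    show "length (map (\<lambda>i. map (\<lambda>i. bdec R n w ! i \<oplus>\<^bsub>R\<^esub> chan_out R xs ts gs ! i \<ominus>\<^bsub>R\<^esub> gs ! i \<otimes>\<^bsub>R\<^esub> ts ! i) [0..<n] ! i \<ominus>\<^bsub>R\<^esub> xs ! i) [0..<n]) = length (bdec R n w)"
      using d by (simp add: seqs_len)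
    fix i assume "i < length (map (\<lambda>i. map (\<lambda>i. bdec R n w ! i \<oplus>\<^bsub>R\<^esub> chan_out R xs ts gs ! i \<ominus>\<^bsub>R\<^esub> gs ! i \<otimes>\<^bsub>R\<^esub> ts ! i) [0..<n] ! i \<ominus>\<^bsub>R\<^esub> xs ! i) [0..<n])"
    then have i: "i < n" by simp
    have "xs ! i \<in> carrier R" "ts ! i \<in> carrier R" "gs ! i \<in> carrier R" "bdec R n w ! i \<in> carrier R"
      using i a d seqs_nth by blast+
    then show "map (\<lambda>i. map (\<lambda>i. bdec R n w ! i \<oplus>\<^bsub>R\<^esub> chan_out R xs ts gs ! i \<ominus>\<^bsub>R\<^esub> gs ! i \<otimes>\<^bsub>R\<^esub> ts ! i) [0..<n] ! i \<ominus>\<^bsub>R\<^esub> xs ! i) [0..<n] ! i = bdec R n w ! i"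
      using i a(1,5) by (simp add: chan_out_nth seqs_len cring.t2 cring.cring_simprules(5))
  qed
qed



lemma seqs_ne: "ring R \<Longrightarrow> seqs R n \<noteq> {}"
  using ring.ring_simprules(2)[of R] by (auto simp: seqs_def intro!: exI[of _ "replicate n \<zero>\<^bsub>R\<^esub>"])

lemma nsZ_box:
  assumes "cring R" "finite (carrier R)"
  shows "ns_box R n (card (seqs R n)) (nsZ R n)"
proof -
  let ?S = "seqs R n" and ?m = "card (seqs R n)"
  have fin: "finite ?S" using assms(2) by (simp add: seqs_lseqs lseqs_finite)
  have ne: "?S \<noteq> {}" using seqs_ne assms(1) cring.axioms(1) by blast
  have m1: "?m \<ge> 1" using fin ne by (simp add: Suc_le_eq card_gt_0_iff)
  have snd_eq: "map_pmf snd (nsZ R n s t) = map_pmf (benc R n) (pmf_of_set ?S)"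
    if "s \<in> {..<?m} \<times> ?S" "t \<in> ?S \<times> ?S" for s t
  proof -
    let ?c = "cvec R n (fst s) (snd s) (fst t) (snd t)"
    have c: "?c \<in> ?S" using that cvec_seqs[OF assms] by auto
    have "map_pmf snd (nsZ R n s t) = map_pmf (benc R n) (map_pmf (fvec R n ?c) (pmf_of_set ?S))"
      unfolding nsZ_def by (simp add: map_pmf_comp)
    also have "map_pmf (fvec R n ?c) (pmf_of_set ?S) = pmf_of_set ?S"
      using fvec_bij[OF assms(1) c] fin ne by (simp add: map_pmf_of_set_inj bij_betw_def)
    finally show ?thesis .
  qed
  have fst_eq: "map_pmf fst (nsZ R n s t) = pmf_of_set ?S" for s t
    unfolding nsZ_def by (simp add: map_pmf_comp)
  have setp: "set_pmf (nsZ R n s t) \<subseteq> ?S \<times> {..<?m}"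
    if "s \<in> {..<?m} \<times> ?S" "t \<in> ?S \<times> ?S" for s t
  proof -
    let ?c = "cvec R n (fst s) (snd s) (fst t) (snd t)"
    have c: "?c \<in> ?S" using that cvec_seqs[OF assms] by auto
    show ?thesis unfolding nsZ_def using fin ne fvec_seqs[OF assms(1) c] bij_betwE[OF benc_bij[OF assms(2), of n]]
      by auto
  qed
  show ?thesis unfolding ns_box_def
    using m1 fst_eq snd_eq setp by (intro conjI exI[of _ "{..<?m}"]) (auto)
qed

lemma nsZ_success:
  assumes "cring R" "finite (carrier R)"
  shows "ns_success R n (card (seqs R n)) (nsZ R n) = 1"
proof -
  let ?S = "seqs R n" and ?m = "card (seqs R n)"
  let ?q = "real (card (carrier R))"
  have fin: "finite ?S" using assms(2) by (simp add: seqs_lseqs lseqs_finite)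
  have ne: "?S \<noteq> {}" using seqs_ne assms(1) cring.axioms(1) by blast
  have m1: "?m \<ge> 1" using fin ne by (simp add: Suc_le_eq card_gt_0_iff)
  have cardS: "card ?S = card (carrier R) ^ n" using assms(2) by (simp add: seqs_lseqs card_lseqs)
  have pt: "pmf (nsZ R n (w, ts) (chan_out R xs ts gs, gs)) (xs, w) = 1 / real ?m"
    if "w < ?m" "ts \<in> ?S" "gs \<in> ?S" "xs \<in> ?S" for w ts gs xs
  proof -
    have "pmf (nsZ R n (w, ts) (chan_out R xs ts gs, gs)) (xs, w)
       = measure (pmf_of_set ?S) {a. a = xs \<and> benc R n (fvec R n (cvec R n w ts (chan_out R xs ts gs) gs) a) = w}"
      unfolding nsZ_def pmf_map by (simp add: vimage_def)
    also have "{a. a = xs \<and> benc R n (fvec R n (cvec R n w ts (chan_out R xs ts gs) gs) a) = w} = {xs}"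
      using fvec_cvec[OF assms that(1,2,4,3)] benc_bdec[OF assms(2) that(1)] by auto
    finally show ?thesis using that fin ne by (simp add: measure_pmf_single)
  qed
  have "(\<Sum>w<?m. \<Sum>ts\<in>?S. \<Sum>gs\<in>?S. \<Sum>xs\<in>?S. pmf (nsZ R n (w, ts) (chan_out R xs ts gs, gs)) (xs, w))
      = (\<Sum>w<?m. \<Sum>ts\<in>?S. \<Sum>gs\<in>?S. \<Sum>xs\<in>?S. 1 / real ?m)"
    by (intro sum.cong refl) (simp add: pt)
  also have "\<dots> = real ?m * ?q ^ n * ?q ^ n" using m1 by (simp add: cardS)
  finally have *: "(\<Sum>w<?m. \<Sum>ts\<in>?S. \<Sum>gs\<in>?S. \<Sum>xs\<in>?S. pmf (nsZ R n (w, ts) (chan_out R xs ts gs, gs)) (xs, w))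
      = real ?m * ?q ^ n * ?q ^ n" .
  have "\<zero>\<^bsub>R\<^esub> \<in> carrier R" using assms(1) cring.axioms(1) ring.ring_simprules(2) by blast
  then have "carrier R \<noteq> {}" by blast
  then have qpos: "?q > 0" using assms(2) by (simp add: card_gt_0_iff)
  have e: "?q ^ (2*n) = ?q ^ n * ?q ^ n" by (simp only: mult_2 power_add)
  show ?thesis unfolding ns_success_def * e using m1 qpos by simp
qed



lemma G2:
  fixes p :: "'j \<Rightarrow> real"
  assumes "finite Y" "finite J" "\<And>j. j \<in> J \<Longrightarrow> f j \<in> Y"
  shows "(\<Sum>j\<in>J. p j * g (f j)) = (\<Sum>y\<in>Y. (\<Sum>j\<in>J. p j * (if f j = y then 1 else 0)) * g y)"
proof -
  have "(\<Sum>y\<in>Y. (\<Sum>j\<in>J. p j * (if f j = y then 1 else 0)) * g y)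
      = (\<Sum>y\<in>Y. \<Sum>j\<in>J. (if f j = y then p j * g y else 0))"
    unfolding sum_distrib_right by (intro sum.cong refl) simp
  also have "\<dots> = (\<Sum>j\<in>J. \<Sum>y\<in>Y. (if f j = y then p j * g y else 0))"
    by (rule sum.swap)
  also have "\<dots> = (\<Sum>j\<in>J. p j * g (f j))"
    using assms by (intro sum.cong refl) (simp add: sum.delta)
  finally show ?thesis by simp
qed

lemma G1:
  fixes p :: "'j \<Rightarrow> real"
  assumes "finite Y" "finite J" "\<And>j. j \<in> J \<Longrightarrow> f j \<in> Y"
  shows "(\<Sum>y\<in>Y. (\<Sum>j\<in>J. p j * (if f j = y then 1 else 0))^2)
       = (\<Sum>j\<in>J. \<Sum>j'\<in>J. p j * p j' * (if f j = f j' then 1 else 0))"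
proof -
  have "(\<Sum>y\<in>Y. (\<Sum>j\<in>J. p j * (if f j = y then 1 else 0))^2)
      = (\<Sum>y\<in>Y. \<Sum>j\<in>J. \<Sum>j'\<in>J. p j * (if f j = y then 1 else 0) * (p j' * (if f j' = y then 1 else 0)))"
    by (simp add: power2_eq_square sum_product)
  also have "\<dots> = (\<Sum>j\<in>J. \<Sum>j'\<in>J. \<Sum>y\<in>Y. (if f j = y then p j * p j' * (if f j = f j' then 1 else 0) else 0))"
    by (subst sum.swap, rule sum.cong, simp, subst sum.swap, rule sum.cong, simp) (intro sum.cong refl, auto)
  also have "\<dots> = (\<Sum>j\<in>J. \<Sum>j'\<in>J. p j * p j' * (if f j = f j' then 1 else 0))"
    using assms by (intro sum.cong refl) (simp add: sum.delta)
  finally show ?thesis .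
qed

lemma AD_bound:
  fixes A D T :: real
  assumes "A \<ge> 0" "D \<ge> 0" "D \<le> 1" "T > 0"
  shows "A * D \<le> T * D + A^2 / (4*T)"
proof (cases "A \<le> T")
  case True
  then have "A * D \<le> T * D" using assms by (simp add: mult_right_mono)
  moreover have "A^2/(4*T) \<ge> 0" using assms by simp
  ultimately show ?thesis by linarith
next
  case False
  have "A * D = T * D + (A - T) * D" by (simp add: algebra_simps)
  also have "(A - T) * D \<le> A - T" using False assms by (simp add: mult_left_le)
  also have "A - T \<le> A^2/(4*T)"
  proof -
    have "(A - 2*T)^2 \<ge> 0" by simp
    then have "4*T*(A - T) \<le> A^2" by (simp add: power2_eq_square algebra_simps)
    then show ?thesis using assms by (simp add: field_simps)
  qed
  finally show ?thesis by simp
qed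

lemma field_unique:
  fixes R :: "('a, 'b) ring_scheme" (structure)
  assumes "field R" "finite (carrier R)" "x \<in> carrier R" "x' \<in> carrier R" "t \<in> carrier R" "t' \<in> carrier R" "t \<noteq> t'"
  shows "card {a \<in> carrier R. x \<oplus>\<^bsub>R\<^esub> a \<otimes>\<^bsub>R\<^esub> t = x' \<oplus>\<^bsub>R\<^esub> a \<otimes>\<^bsub>R\<^esub> t'} \<le> 1"
proof -
  interpret field R by fact
  have "a = b" if "a \<in> carrier R" "b \<in> carrier R" "x \<oplus> a \<otimes> t = x' \<oplus> a \<otimes> t'" "x \<oplus> b \<otimes> t = x' \<oplus> b \<otimes> t'" for a b
  proof -
    have e1: "(a \<ominus> b) \<otimes> (t \<ominus> t') = ((x \<oplus> a \<otimes> t) \<ominus> (x' \<oplus> a \<otimes> t')) \<ominus> ((x \<oplus> b \<otimes> t) \<ominus> (x' \<oplus> b \<otimes> t'))"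
      using that(1,2) assms(3-6) by algebra
    have e2: "((x' \<oplus> a \<otimes> t') \<ominus> (x' \<oplus> a \<otimes> t')) \<ominus> ((x' \<oplus> b \<otimes> t') \<ominus> (x' \<oplus> b \<otimes> t')) = \<zero>"
      using that(1,2) assms(3-6) by algebra
    have "(a \<ominus> b) \<otimes> (t \<ominus> t') = \<zero>" using e1 e2 that(3,4) by metis
    moreover have c1: "a \<ominus> b \<in> carrier R" using that(1,2) by (rule minus_closed)
    moreover have c2: "t \<ominus> t' \<in> carrier R" using assms(5,6) by (rule minus_closed)
    ultimately have "a \<ominus> b = \<zero> \<or> t \<ominus> t' = \<zero>" by (rule integral)
    moreover have "t \<ominus> t' \<noteq> \<zero>"
    proof
      assume "t \<ominus> t' = \<zero>"
      moreover have "t = (t \<ominus> t') \<oplus> t'" using assms(5,6) by algebra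
      ultimately have "t = t'" using assms(6) by simp
      then show False using assms(7) by simp
    qed
    ultimately have "a \<ominus> b = \<zero>" by simp
    moreover have "a = (a \<ominus> b) \<oplus> b" using that(1,2) by algebra
    ultimately show "a = b" using that(2) by simp
  qed
  then show ?thesis using card_le_Suc0_iff_eq[of "{a \<in> carrier R. x \<oplus> a \<otimes> t = x' \<oplus> a \<otimes> t'}"] assms(2) by auto
qed



lemma G3:
  fixes e :: "'t \<Rightarrow> 'x \<Rightarrow> real"
  assumes "finite S1" "finite S2" "\<And>t x. e t x \<ge> 0" "\<And>t. t \<in> S1 \<Longrightarrow> (\<Sum>x\<in>S2. e t x) \<le> 1"
    "\<And>t. t \<in> S1 \<Longrightarrow> h t \<ge> 0"
  shows "(\<Sum>j\<in>S1 \<times> S2. e (fst j) (snd j) * h (fst j)) \<le> (\<Sum>t\<in>S1. h t)"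
proof -
  have "(\<Sum>j\<in>S1 \<times> S2. e (fst j) (snd j) * h (fst j)) = (\<Sum>t\<in>S1. \<Sum>x\<in>S2. e t x * h t)"
    by (simp add: sum.cartesian_product split_def)
  also have "\<dots> = (\<Sum>t\<in>S1. h t * (\<Sum>x\<in>S2. e t x))"
    by (simp add: sum_distrib_left mult.commute)
  also have "\<dots> \<le> (\<Sum>t\<in>S1. h t * 1)"
    using assms by (intro sum_mono mult_left_mono) auto
  finally show ?thesis by simp
qed

definition Kf :: "nat \<Rightarrow> real \<Rightarrow> 'a list \<Rightarrow> 'a list \<Rightarrow> real" where
  "Kf n q ts ts' = (\<Prod>i<n. if ts ! i = ts' ! i then q else 1)"

lemma Kf_nonneg: "q \<ge> 0 \<Longrightarrow> Kf n q ts ts' \<ge> 0"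
  unfolding Kf_def by (intro prod_nonneg) auto

lemma ind_prod:
  fixes P :: "nat \<Rightarrow> bool"
  shows "(if (\<forall>i<n. P i) then 1 else 0 :: real) = (\<Prod>i<n. if P i then 1 else 0)"
proof (cases "\<forall>i<n. P i")
  case True then show ?thesis by simp
next
  case False
  then obtain i where "i < n" "\<not> P i" by blast
  then show ?thesis using False by (subst prod_zero[of "{..<n}"]) auto
qed

lemma sum_ind_card: "finite A \<Longrightarrow> (\<Sum>a\<in>A. if P a then 1 else 0 :: real) = real (card {a\<in>A. P a})"
  by (simp add: sum.If_cases Int_def conj_commute)

lemma collision_count:
  assumes "field R" "finite (carrier R)"
    "xs \<in> seqs R n" "xs' \<in> seqs R n" "ts \<in> seqs R n" "ts' \<in> seqs R n"
  shows "(\<Sum>gs\<in>seqs R n. if chan_out R xs ts gs = chan_out R xs' ts' gs then 1 else 0 :: real)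
     \<le> Kf n (real (card (carrier R))) ts ts'"
proof -
  let ?P = "\<lambda>i a. xs!i \<oplus>\<^bsub>R\<^esub> a \<otimes>\<^bsub>R\<^esub> ts!i = xs'!i \<oplus>\<^bsub>R\<^esub> a \<otimes>\<^bsub>R\<^esub> ts'!i"
  have lens: "length xs = n" "length xs' = n" using assms(3,4) by (auto simp: seqs_len)
  have "(\<Sum>gs\<in>seqs R n. if chan_out R xs ts gs = chan_out R xs' ts' gs then 1 else 0 :: real)
     = (\<Sum>gs\<in>seqs R n. \<Prod>i<n. if ?P i (gs!i) then 1 else 0)"
  proof (intro sum.cong refl)
    fix gs assume "gs \<in> seqs R n"
    have "(chan_out R xs ts gs = chan_out R xs' ts' gs) = (\<forall>i<n. ?P i (gs!i))"
      using lens by (simp add: list_eq_iff_nth_eq chan_out_nth) (simp add: chan_out_def)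
    then show "(if chan_out R xs ts gs = chan_out R xs' ts' gs then 1 else 0 :: real) = (\<Prod>i<n. if ?P i (gs!i) then 1 else 0)"
      by (simp add: ind_prod)
  qed
  also have "\<dots> = (\<Prod>i<n. \<Sum>a\<in>carrier R. if ?P i a then 1 else 0)"
    unfolding seqs_lseqs using assms(2) by (rule sum_prod_lseqs)
  also have "\<dots> \<le> Kf n (real (card (carrier R))) ts ts'"
    unfolding Kf_def
  proof (intro prod_mono conjI)
    fix i assume i: "i \<in> {..<n}"
    show "0 \<le> (\<Sum>a\<in>carrier R. if ?P i a then 1 else 0 :: real)" by (intro sum_nonneg) auto
    show "(\<Sum>a\<in>carrier R. if ?P i a then 1 else 0 :: real) \<le> (if ts ! i = ts' ! i then real (card (carrier R)) else 1)"
    proof (cases "ts ! i = ts' ! i")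
      case True
      have "(\<Sum>a\<in>carrier R. if ?P i a then 1 else 0 :: real) \<le> (\<Sum>a\<in>carrier R. 1)" by (intro sum_mono) auto
      then show ?thesis using True by simp
    next
      case False
      have "card {a \<in> carrier R. ?P i a} \<le> 1"
        using field_unique[OF assms(1,2), of "xs!i" "xs'!i" "ts!i" "ts'!i"] False i assms(3-6) seqs_nth by auto
      then show ?thesis using False sum_ind_card[OF assms(2), of "?P i"] by simp
    qed
  qed
  finally show ?thesis .
qed

lemma sum_Kf:
  assumes "finite S"
  shows "(\<Sum>ts\<in>lseqs S n. \<Sum>ts'\<in>lseqs S n. Kf n (real (card S)) ts ts') \<le> (2 * real (card S) ^ 2) ^ n"
proof -
  let ?q = "real (card S)"
  let ?k = "\<lambda>a b. if a = b then ?q else 1"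
  have "(\<Sum>ts\<in>lseqs S n. \<Sum>ts'\<in>lseqs S n. Kf n ?q ts ts') = (\<Sum>ts\<in>lseqs S n. \<Prod>i<n. \<Sum>b\<in>S. ?k (ts!i) b)"
    unfolding Kf_def using assms by (intro sum.cong refl) (rule sum_prod_lseqs)
  also have "\<dots> = (\<Prod>i<n. \<Sum>a\<in>S. \<Sum>b\<in>S. ?k a b)"
    using assms by (rule sum_prod_lseqs)
  also have "\<dots> = (\<Sum>a\<in>S. \<Sum>b\<in>S. ?k a b) ^ n" by simp
  also have "\<dots> \<le> (2 * ?q ^ 2) ^ n"
  proof (rule power_mono)
    have "(\<Sum>b\<in>S. ?k a b) \<le> 2 * ?q" if "a \<in> S" for a
    proof -
      have "(\<Sum>b\<in>S. ?k a b) \<le> (\<Sum>b\<in>S. 1 + (if a = b then ?q else 0))" by (intro sum_mono) auto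
      also have "\<dots> = ?q + ?q" using that assms by (simp add: sum.distrib)
      finally show ?thesis by simp
    qed
    then have "(\<Sum>a\<in>S. \<Sum>b\<in>S. ?k a b) \<le> (\<Sum>a\<in>S. 2 * ?q)" by (intro sum_mono) auto
    then show "(\<Sum>a\<in>S. \<Sum>b\<in>S. ?k a b) \<le> 2 * ?q ^ 2" by (simp add: power2_eq_square)
    show "0 \<le> (\<Sum>a\<in>S. \<Sum>b\<in>S. ?k a b)" by (intro sum_nonneg) auto
  qed
  finally show ?thesis .
qed



lemma classical_converse:
  assumes fld: "field R" and fin: "finite (carrier R)" and sch: "classical_scheme R n m enc dec"
  shows "classical_success R n m enc dec \<le> 2 ^ n / real m + 1/4"
proof -
  let ?S = "seqs R n"
  let ?q = "real (card (carrier R))"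
  let ?J = "?S \<times> ?S"
  define T :: real where "T = 2 ^ n"
  have Tpos: "T > 0" by (simp add: T_def)
  have rg: "ring R" using fld field.axioms(1) cring.axioms(1) domain.axioms(1) by blast
  have finS: "finite ?S" using fin by (simp add: seqs_lseqs lseqs_finite)
  have cardS: "card ?S = card (carrier R) ^ n" using fin by (simp add: seqs_lseqs card_lseqs)
  have m1: "m \<ge> 1" using sch by (simp add: classical_scheme_def)
  have encS: "set_pmf (enc w ts) \<subseteq> ?S" if "w < m" "ts \<in> ?S" for w ts
    using sch that by (simp add: classical_scheme_def)
  have esum: "(\<Sum>xs\<in>?S. pmf (enc w ts) xs) \<le> 1" for w ts using finS by (rule sum_pmf_le1)
  define p where "p w j = pmf (enc w (fst j)) (snd j)" for w j
  define f where "f gs j = chan_out R (snd j) (fst j) gs" for gs j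
  define D where "D w y gs = pmf (dec y gs) w" for w y gs
  define A where "A w gs y = (\<Sum>j\<in>?J. p w j * (if f gs j = y then 1 else 0))" for w gs y
  have fJ: "f gs j \<in> ?S" if "gs \<in> ?S" "j \<in> ?J" for gs j
    using that chan_out_seqs[OF rg] unfolding f_def by auto
  have finJ: "finite ?J" using finS by simp
  have step1: "(\<Sum>w<m. \<Sum>ts\<in>?S. \<Sum>gs\<in>?S. \<Sum>xs\<in>?S. pmf (enc w ts) xs * pmf (dec (chan_out R xs ts gs) gs) w)
     = (\<Sum>w<m. \<Sum>gs\<in>?S. \<Sum>y\<in>?S. A w gs y * D w y gs)"
  proof (rule sum.cong[OF refl])
    fix w assume "w \<in> {..<m}"
    have "(\<Sum>ts\<in>?S. \<Sum>gs\<in>?S. \<Sum>xs\<in>?S. pmf (enc w ts) xs * pmf (dec (chan_out R xs ts gs) gs) w)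
        = (\<Sum>gs\<in>?S. \<Sum>ts\<in>?S. \<Sum>xs\<in>?S. pmf (enc w ts) xs * pmf (dec (chan_out R xs ts gs) gs) w)"
      by (rule sum.swap)
    also have "\<dots> = (\<Sum>gs\<in>?S. \<Sum>j\<in>?J. p w j * D w (f gs j) gs)"
      by (intro sum.cong refl) (simp add: sum.cartesian_product split_def p_def f_def D_def)
    also have "\<dots> = (\<Sum>gs\<in>?S. \<Sum>y\<in>?S. A w gs y * D w y gs)"
      unfolding A_def by (intro sum.cong refl G2[OF finS finJ]) (use fJ in auto)
    finally show "(\<Sum>ts\<in>?S. \<Sum>gs\<in>?S. \<Sum>xs\<in>?S. pmf (enc w ts) xs * pmf (dec (chan_out R xs ts gs) gs) w)
        = (\<Sum>gs\<in>?S. \<Sum>y\<in>?S. A w gs y * D w y gs)" .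
  qed
  have Anon: "A w gs y \<ge> 0" for w gs y unfolding A_def p_def by (intro sum_nonneg) auto
  have step2: "(\<Sum>w<m. \<Sum>gs\<in>?S. \<Sum>y\<in>?S. A w gs y * D w y gs)
     \<le> (\<Sum>w<m. \<Sum>gs\<in>?S. \<Sum>y\<in>?S. T * D w y gs + (A w gs y)^2 / (4*T))"
    by (intro sum_mono AD_bound Anon Tpos) (auto simp: D_def pmf_le_1)
  have Dsum: "(\<Sum>w<m. \<Sum>gs\<in>?S. \<Sum>y\<in>?S. D w y gs) \<le> ?q ^ n * ?q ^ n"
  proof -
    have "(\<Sum>w<m. \<Sum>gs\<in>?S. \<Sum>y\<in>?S. D w y gs) = (\<Sum>gs\<in>?S. \<Sum>y\<in>?S. \<Sum>w<m. D w y gs)"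
      by (subst sum.swap, rule sum.cong, simp, subst sum.swap, simp)
    also have "\<dots> \<le> (\<Sum>gs\<in>?S. \<Sum>y\<in>?S. 1)"
      unfolding D_def by (intro sum_mono sum_pmf_le1) auto
    finally show ?thesis by (simp add: cardS)
  qed
  have Asq: "(\<Sum>gs\<in>?S. \<Sum>y\<in>?S. (A w gs y)^2) \<le> (2 * ?q ^ 2) ^ n" if w: "w < m" for w
  proof -
    have "(\<Sum>gs\<in>?S. \<Sum>y\<in>?S. (A w gs y)^2)
        = (\<Sum>gs\<in>?S. \<Sum>j\<in>?J. \<Sum>j'\<in>?J. p w j * p w j' * (if f gs j = f gs j' then 1 else 0))"
      unfolding A_def by (intro sum.cong refl G1[OF finS finJ]) (use fJ in auto)
    also have "\<dots> = (\<Sum>j\<in>?J. \<Sum>j'\<in>?J. p w j * p w j' * (\<Sum>gs\<in>?S. if f gs j = f gs j' then 1 else 0))"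
      by (subst sum.swap, rule sum.cong, simp, subst sum.swap) (simp add: sum_distrib_left)
    also have "\<dots> \<le> (\<Sum>j\<in>?J. \<Sum>j'\<in>?J. p w j * (p w j' * Kf n ?q (fst j) (fst j')))"
      unfolding f_def
      by (intro sum_mono, subst mult.assoc, intro mult_left_mono collision_count[OF fld fin])
         (auto simp: p_def)
    also have "\<dots> \<le> (\<Sum>j\<in>?J. p w j * (\<Sum>ts'\<in>?S. Kf n ?q (fst j) ts'))"
      unfolding sum_distrib_left[symmetric]
      by (intro sum_mono mult_left_mono) (auto simp: p_def intro!: G3[OF finS finS] esum Kf_nonneg)
    also have "\<dots> \<le> (\<Sum>ts\<in>?S. \<Sum>ts'\<in>?S. Kf n ?q ts ts')"
    proof -
      have hn: "\<And>t. t\<in>?S \<Longrightarrow> 0 \<le> (\<Sum>ts'\<in>?S. Kf n ?q t ts')" by (intro sum_nonneg Kf_nonneg) auto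
      show ?thesis
        using G3[OF finS finS, of "\<lambda>t x. pmf (enc w t) x" "\<lambda>ts. \<Sum>ts'\<in>?S. Kf n ?q ts ts'"] esum hn
        unfolding p_def by simp
    qed
    also have "\<dots> \<le> (2 * ?q ^ 2) ^ n"
      unfolding seqs_lseqs using sum_Kf[OF fin] by simp
    finally show ?thesis .
  qed
  have "(\<Sum>w<m. \<Sum>gs\<in>?S. \<Sum>y\<in>?S. T * D w y gs + (A w gs y)^2 / (4*T))
      = T * (\<Sum>w<m. \<Sum>gs\<in>?S. \<Sum>y\<in>?S. D w y gs) + (\<Sum>w<m. \<Sum>gs\<in>?S. \<Sum>y\<in>?S. (A w gs y)^2) / (4*T)"
    by (simp add: sum.distrib sum_distrib_left sum_divide_distrib)
  also have "\<dots> \<le> T * (?q ^ n * ?q ^ n) + (\<Sum>w<m. (2 * ?q ^ 2) ^ n) / (4*T)"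
    using Dsum Tpos by (intro add_mono mult_left_mono divide_right_mono sum_mono Asq) auto
  finally have tot: "(\<Sum>w<m. \<Sum>ts\<in>?S. \<Sum>gs\<in>?S. \<Sum>xs\<in>?S. pmf (enc w ts) xs * pmf (dec (chan_out R xs ts gs) gs) w)
      \<le> T * (?q ^ n * ?q ^ n) + real m * (2 * ?q ^ 2) ^ n / (4*T)"
    using step1 step2 by simp
  have "\<zero>\<^bsub>R\<^esub> \<in> carrier R" using rg ring.ring_simprules(2) by blast
  then have "carrier R \<noteq> {}" by blast
  then have qpos: "?q > 0" using fin by (simp add: card_gt_0_iff)
  have e: "?q ^ (2*n) = ?q ^ n * ?q ^ n" by (simp only: mult_2 power_add)
  have "classical_success R n m enc dec \<le> (T * (?q ^ n * ?q ^ n) + real m * (2 * ?q ^ 2) ^ n / (4*T)) / (real m * (?q ^ n * ?q ^ n))"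
    unfolding classical_success_def e using m1 qpos tot by (intro divide_right_mono) auto
  also have "\<dots> = T / real m + (2 * ?q ^ 2) ^ n / (4 * T * (?q ^ n * ?q ^ n))"
    using m1 qpos Tpos by (simp add: field_simps)
  also have "(2 * ?q ^ 2) ^ n = 2 ^ n * (?q ^ n * ?q ^ n)"
    by (simp add: power_mult_distrib power2_eq_square)
  also have "T / real m + 2 ^ n * (?q ^ n * ?q ^ n) / (4 * T * (?q ^ n * ?q ^ n)) = 2 ^ n / real m + 1/4"
    using qpos by (simp add: T_def)
  finally show ?thesis .
qed



lemma rate_le:
  fixes m :: "nat \<Rightarrow> nat" and c b L :: real
  assumes lim: "(\<lambda>n. log 2 (real (m n)) / real n) \<longlonglongrightarrow> L"
    and ev: "eventually (\<lambda>n. real (m n) \<le> c * b ^ n) sequentially"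
    and c: "c \<ge> 1" and b: "b \<ge> 1"
  shows "L \<le> log 2 b"
proof -
  have lim2: "(\<lambda>n. log 2 c / real n + log 2 b) \<longlonglongrightarrow> log 2 b"
    using tendsto_add[OF lim_const_over_n[of "log 2 c"] tendsto_const[of "log 2 b"]] by simp
  have "eventually (\<lambda>n. log 2 (real (m n)) / real n \<le> log 2 c / real n + log 2 b) sequentially"
    using ev eventually_ge_at_top[of 1]
  proof eventually_elim
    case (elim n)
    have lc: "log 2 c \<ge> 0" and lb: "log 2 b \<ge> 0" using c b by auto
    have n: "real n > 0" using elim by simp
    show ?case
    proof (cases "m n = 0")
      case True
      have "log 2 (real (m n)) = 0" using True by (simp add: log_def)
      then show ?thesis using lc lb n by (auto intro!: add_nonneg_nonneg divide_nonneg_pos)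
    next
      case False
      then have "log 2 (real (m n)) \<le> log 2 (c * b ^ n)" using elim by simp
      also have "\<dots> = log 2 c + real n * log 2 b" using c b by (simp add: log_mult log_nat_power)
      finally have "log 2 (real (m n)) / real n \<le> (log 2 c + real n * log 2 b) / real n"
        using n by (intro divide_right_mono) auto
      also have "\<dots> = log 2 c / real n + log 2 b" using n by (simp add: field_simps)
      finally show ?thesis .
    qed
  qed
  then show ?thesis using lim lim2 by (intro tendsto_le[OF _ lim2 lim]) auto
qed

lemma field_cring: "field R \<Longrightarrow> cring R"
  using field.axioms(1) domain.axioms(1) by blast

lemma field_ring: "field R \<Longrightarrow> ring R"
  using field_cring cring.axioms(1) by blast

lemma card_pos: "field R \<Longrightarrow> finite (carrier R) \<Longrightarrow> card (carrier R) > 0"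
proof -
  assume "field R" "finite (carrier R)"
  then have "\<zero>\<^bsub>R\<^esub> \<in> carrier R" using field_ring ring.ring_simprules(2) by blast
  then show ?thesis using \<open>finite (carrier R)\<close> card_gt_0_iff by blast
qed

lemma NS_ach_le:
  assumes fld: "field R" and fin: "finite (carrier R)" and ach: "achievable_NS R r"
  shows "r \<le> log 2 (real (card (carrier R)))"
proof -
  obtain m Z L where box: "\<forall>n\<ge>1. ns_box R n (m n) (Z n)"
    and err: "(\<lambda>n. ns_error R n (m n) (Z n)) \<longlonglongrightarrow> 0"
    and rate: "(\<lambda>n. log 2 (real (m n)) / real n) \<longlonglongrightarrow> L" and rL: "L \<ge> r"
    using ach unfolding achievable_NS_def by blast
  have "(\<lambda>n. 1 - ns_error R n (m n) (Z n)) \<longlonglongrightarrow> 1 - 0"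
    by (intro tendsto_intros err)
  then have succ: "(\<lambda>n. ns_success R n (m n) (Z n)) \<longlonglongrightarrow> 1" by (simp add: ns_error_def)
  have "eventually (\<lambda>n. ns_success R n (m n) (Z n) > 1/2) sequentially"
    using order_tendstoD(1)[OF succ, of "1/2"] by simp
  then have "eventually (\<lambda>n. real (m n) \<le> 2 * real (card (carrier R)) ^ n) sequentially"
    using eventually_ge_at_top[of 1]
  proof eventually_elim
    case (elim n)
    have bx: "ns_box R n (m n) (Z n)" using box elim by auto
    then have m1: "m n \<ge> 1" by (simp add: ns_box_def)
    have "1/2 < real (card (carrier R)) ^ n / real (m n)"
      using elim ns_converse[OF field_ring[OF fld] fin bx] by linarith
    then show ?case using m1 by (simp add: field_simps)
  qed
  then have "L \<le> log 2 (real (card (carrier R)))"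
    using card_pos[OF fld fin] by (intro rate_le[OF rate]) auto
  then show ?thesis using rL by simp
qed

lemma NS_ach_top:
  assumes fld: "field R" and fin: "finite (carrier R)"
  shows "achievable_NS R (log 2 (real (card (carrier R))))"
proof -
  let ?q = "real (card (carrier R))"
  have cr: "cring R" using fld by (rule field_cring)
  have cardS: "card (seqs R n) = card (carrier R) ^ n" for n using fin by (simp add: seqs_lseqs card_lseqs)
  have "eventually (\<lambda>n. log 2 (real (card (seqs R n))) / real n = log 2 ?q) sequentially"
    using eventually_ge_at_top[of 1]
    by eventually_elim (simp add: cardS log_nat_power)
  then have rate: "(\<lambda>n. log 2 (real (card (seqs R n))) / real n) \<longlonglongrightarrow> log 2 ?q"
    by (rule tendsto_eventually)
  have err: "(\<lambda>n. ns_error R n (card (seqs R n)) (nsZ R n)) \<longlonglongrightarrow> 0"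
    by (simp add: ns_error_def nsZ_success[OF cr fin])
  show ?thesis unfolding achievable_NS_def
    using nsZ_box[OF cr fin] err rate
    by (intro exI[of _ "\<lambda>n. card (seqs R n)"] exI[of _ "\<lambda>n. nsZ R n"] exI[of _ "log 2 ?q"]) auto
qed

lemma NS_ach_mono: "achievable_NS R a \<Longrightarrow> r \<le> a \<Longrightarrow> achievable_NS R r"
  unfolding achievable_NS_def by (meson order_trans)

lemma capacity_NS_eq:
  assumes "field R" "finite (carrier R)"
  shows "capacity_NS R = log 2 (real (card (carrier R)))"
proof -
  have "{r. achievable_NS R r} = {..log 2 (real (card (carrier R)))}"
    using NS_ach_le[OF assms] NS_ach_top[OF assms] NS_ach_mono by auto
  then show ?thesis by (simp add: capacity_NS_def)
qed

lemma cl_ach_le: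
  assumes fld: "field R" and fin: "finite (carrier R)" and ach: "achievable_classical R r"
  shows "r \<le> 1"
proof -
  obtain m enc dec L where sch: "\<forall>n\<ge>1. classical_scheme R n (m n) (enc n) (dec n)"
    and err: "(\<lambda>n. classical_error R n (m n) (enc n) (dec n)) \<longlonglongrightarrow> 0"
    and rate: "(\<lambda>n. log 2 (real (m n)) / real n) \<longlonglongrightarrow> L" and rL: "L \<ge> r"
    using ach unfolding achievable_classical_def by blast
  have "(\<lambda>n. 1 - classical_error R n (m n) (enc n) (dec n)) \<longlonglongrightarrow> 1 - 0"
    by (intro tendsto_intros err)
  then have succ: "(\<lambda>n. classical_success R n (m n) (enc n) (dec n)) \<longlonglongrightarrow> 1" by (simp add: classical_error_def)
  have "eventually (\<lambda>n. classical_success R n (m n) (enc n) (dec n) > 1/2) sequentially"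
    using order_tendstoD(1)[OF succ, of "1/2"] by simp
  then have "eventually (\<lambda>n. real (m n) \<le> 4 * 2 ^ n) sequentially"
    using eventually_ge_at_top[of 1]
  proof eventually_elim
    case (elim n)
    have s: "classical_scheme R n (m n) (enc n) (dec n)" using sch elim by auto
    then have m1: "m n \<ge> 1" by (simp add: classical_scheme_def)
    have "1/4 < 2 ^ n / real (m n)"
      using elim classical_converse[OF fld fin s] by linarith
    then show ?case using m1 by (simp add: field_simps)
  qed
  then have "L \<le> log 2 2" by (intro rate_le[OF rate]) auto
  then show ?thesis using rL by simp
qed

lemma cl_ach_zero:
  assumes fld: "field R" and fin: "finite (carrier R)"
  shows "achievable_classical R 0"
proof -
  let ?S = "\<lambda>n. seqs R n"
  define z where "z n = replicate n \<zero>\<^bsub>R\<^esub>" for n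
  have zc: "\<zero>\<^bsub>R\<^esub> \<in> carrier R" using fld field_ring ring.ring_simprules(2) by blast
  have zS: "z n \<in> ?S n" for n using zc by (auto simp: z_def seqs_def)
  have finS: "finite (?S n)" for n using fin by (simp add: seqs_lseqs lseqs_finite)
  have sch: "classical_scheme R n 1 (\<lambda>w ts. return_pmf (z n)) (\<lambda>y g. return_pmf 0)" for n
    using zS by (simp add: classical_scheme_def)
  have inner: "(\<Sum>xs\<in>?S n. pmf (return_pmf (z n)) xs * pmf (return_pmf (0::nat)) 0) = 1" for n
    using zS[of n] finS[of n] by (simp add: indicator_def sum.delta')
  have cardS: "card (?S n) = card (carrier R) ^ n" for n using fin by (simp add: seqs_lseqs card_lseqs)
  have qpos: "real (card (carrier R)) > 0" using card_pos[OF fld fin] by simp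
  have succ: "classical_success R n 1 (\<lambda>w ts. return_pmf (z n)) (\<lambda>y g. return_pmf 0) = 1" for n
  proof -
    have e: "real (card (carrier R)) ^ (2*n) = real (card (carrier R)) ^ n * real (card (carrier R)) ^ n"
      by (simp only: mult_2 power_add)
    show ?thesis unfolding classical_success_def using inner qpos by (simp add: cardS e)
  qed
  have errz: "(\<lambda>n. classical_error R n ((\<lambda>n. 1) n) ((\<lambda>n w ts. return_pmf (z n)) n) ((\<lambda>n y g. return_pmf 0) n)) \<longlonglongrightarrow> 0"
    unfolding classical_error_def using succ by simp
  have ratez: "(\<lambda>n. log 2 (real ((\<lambda>n. 1::nat) n)) / real n) \<longlonglongrightarrow> 0" by simp
  show ?thesis unfolding achievable_classical_def
    apply (intro exI[of _ "\<lambda>n. 1"] exI[of _ "\<lambda>n w ts. return_pmf (z n)"] exI[of _ "\<lambda>n y g. return_pmf 0"] exI[of _ 0] conjI)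
    using sch errz ratez by auto
qed

lemma capacity_classical_bounds:
  assumes "field R" "finite (carrier R)"
  shows "0 \<le> capacity_classical R \<and> capacity_classical R \<le> 1"
proof -
  have bdd: "bdd_above {r. achievable_classical R r}"
    by (intro bdd_aboveI[where M=1]) (auto dest: cl_ach_le[OF assms])
  have z: "0 \<in> {r. achievable_classical R r}" using cl_ach_zero[OF assms] by simp
  have "0 \<le> capacity_classical R" unfolding capacity_classical_def by (rule cSup_upper[OF z bdd])
  moreover have "capacity_classical R \<le> 1" unfolding capacity_classical_def
    using z cl_ach_le[OF assms] by (intro cSup_least) auto
  ultimately show ?thesis by simp
qed



lemma big_field: "\<exists>R :: nat ring. field R \<and> finite (carrier R) \<and> card (carrier R) > N"
proof -
  obtain p :: nat where p: "prime p" "p > N" using bigger_prime by blast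
  interpret residues_prime p "residue_ring (int p)" by unfold_locales (use p in auto)
  have inj: "inj_on nat (carrier (residue_ring (int p)))" by (auto simp: res_carrier_eq inj_on_def)
  have "field (image_ring nat (residue_ring (int p)))" by (rule inj_imp_image_ring_is_field[OF inj])
  moreover have "carrier (image_ring nat (residue_ring (int p))) = nat ` {0..int p - 1}"
    by (simp add: image_ring_carrier res_carrier_eq)
  moreover have "card (nat ` {0..int p - 1}) = p"
    using inj by (simp add: card_image res_carrier_eq)
  ultimately show ?thesis using p by (intro exI[of _ "image_ring nat (residue_ring (int p))"]) auto
qed

theorem theorem10:
  shows "(\<forall>R :: nat ring. field R \<and> finite (carrier R) \<longrightarrow>
            capacity_NS R = log 2 (real (card (carrier R))))
       \<and> (\<forall>\<epsilon>>0. \<exists>Q::nat. \<forall>R :: nat ring. field R \<and> finite (carrier R) \<and> card (carrier R) > Q \<longrightarrow>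
            \<bar>capacity_classical R\<bar> \<le> \<epsilon> * log 2 (real (card (carrier R))))
       \<and> (\<forall>B::real. \<exists>R :: nat ring. field R \<and> finite (carrier R) \<and>
            capacity_NS R > B * capacity_classical R)"
proof (intro conjI allI impI)
  fix R :: "nat ring"
  assume "field R \<and> finite (carrier R)"
  then show "capacity_NS R = log 2 (real (card (carrier R)))" using capacity_NS_eq by blast
next
  fix \<epsilon> :: real assume eps: "\<epsilon> > 0"
  show "\<exists>Q::nat. \<forall>R :: nat ring. field R \<and> finite (carrier R) \<and> card (carrier R) > Q \<longrightarrow>
            \<bar>capacity_classical R\<bar> \<le> \<epsilon> * log 2 (real (card (carrier R)))"
  proof (intro exI[of _ "nat \<lceil>2 powr (1/\<epsilon>)\<rceil>"] allI impI)
    fix R :: "nat ring"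
    assume a: "field R \<and> finite (carrier R) \<and> card (carrier R) > nat \<lceil>2 powr (1/\<epsilon>)\<rceil>"
    have b: "0 \<le> capacity_classical R \<and> capacity_classical R \<le> 1" using a capacity_classical_bounds by blast
    have "2 powr (1/\<epsilon>) \<le> real (card (carrier R))" using a by linarith
    moreover have "real (card (carrier R)) > 0" using a by linarith
    ultimately have "1/\<epsilon> \<le> log 2 (real (card (carrier R)))" by (simp add: le_log_iff)
    then have "1 \<le> \<epsilon> * log 2 (real (card (carrier R)))" using eps by (simp add: field_simps)
    then show "\<bar>capacity_classical R\<bar> \<le> \<epsilon> * log 2 (real (card (carrier R)))" using b by linarith
  qed
next
  fix B :: real
  obtain R :: "nat ring" where R: "field R" "finite (carrier R)" "card (carrier R) > nat \<lceil>2 powr \<bar>B\<bar>\<rceil>"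
    using big_field by blast
  have b: "0 \<le> capacity_classical R \<and> capacity_classical R \<le> 1" using R capacity_classical_bounds by blast
  have "2 powr \<bar>B\<bar> < real (card (carrier R))" using R by linarith
  moreover have "real (card (carrier R)) > 0" using R by linarith
  ultimately have l: "\<bar>B\<bar> < log 2 (real (card (carrier R)))" by (simp add: less_log_iff)
  have "B * capacity_classical R \<le> \<bar>B\<bar>"
  proof (cases "B \<ge> 0")
    case True then show ?thesis using b by (simp add: mult_left_le)
  next
    case False
    then have "B * capacity_classical R \<le> 0" using b by (simp add: mult_nonpos_nonneg)
    then show ?thesis by linarith
  qed
  then have "capacity_NS R > B * capacity_classical R" using l capacity_NS_eq[OF R(1,2)] by simp
  then show "\<exists>R :: nat ring. field R \<and> finite (carrier R) \<and> capacity_NS R > B * capacity_classical R"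
    using R by blast
qed

end
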